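(* Under the standing assumptions below, one of the following holds: either there exist a fixed $a'_1\in M'$ and a map $v_1:N\to N'$ such that $\phi\left(\left[\begin{smallmatrix} 1 & 0\\ n & 0\end{smallmatrix}\right]\right)=\left[\begin{smallmatrix} 1 & a'_1\\ v_1(n) & 0\end{smallmatrix}\right]$ for all $n\in N$; or there exist a fixed $b'_2\in N'$ and a map $u_2:N\to M'$ such that $\phi\left(\left[\begin{smallmatrix} 1 & 0\\ n & 0\end{smallmatrix}\right]\right)=\left[\begin{smallmatrix} 0 & u_2(n)\\ b'_2 & 1\end{smallmatrix}\right]$ for all $n\in N$.
   Context: All rings have an identity $1\neq 0$. Standing assumptions: $R,S,R',S'$ are rings whose only idempotents are $0$ and $1$; $M$ is an $R$-$S$-bimodule, $N$ an $S$-$R$-bimodule, $M'$ an $R'$-$S'$-bimodule, $N'$ an $S'$-$R'$-bimodule; $T=\left[\begin{smallmatrix} R & M\\ N & S\end{smallmatrix}\right]$ and $T'=\left[\begin{smallmatrix} R' & M'\\ N' & S'\end{smallmatrix}\right]$ are the Morita context rings with both Morita maps zero, i.e. the sets of formal matrices with entrywise addition and product $\left[\begin{smallmatrix} r & m\\ n & s\end{smallmatrix}\right]\left[\begin{smallmatrix} r' & m'\\ n' & s'\end{smallmatrix}\right]=\left[\begin{smallmatrix} rr' & rm'+ms'\\ nr'+sn' & ss'\end{smallmatrix}\right]$; and $\phi:T\to T'$ is a ring isomorphism. *)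

theory Defs
  imports Main
begin

text \<open>Elements of a Morita context ring with zero Morita maps are represented
as quadruples (r, m, n, s), standing for the formal matrix [[r, m], [n, s]].\<close>

definition only_trivial_idempotents :: "'a::ring_1 itself \<Rightarrow> bool" where
  "only_trivial_idempotents _ \<longleftrightarrow> (\<forall>e::'a. e * e = e \<longrightarrow> e = 0 \<or> e = 1)"

definition bimodule ::
  "('r::ring_1 \<Rightarrow> 'm::ab_group_add \<Rightarrow> 'm) \<Rightarrow> ('m \<Rightarrow> 's::ring_1 \<Rightarrow> 'm) \<Rightarrow> bool" where
  "bimodule lm rm \<longleftrightarrow>
     (\<forall>r x y. lm r (x + y) = lm r x + lm r y) \<and>
     (\<forall>r r' x. lm (r + r') x = lm r x + lm r' x) \<and>
     (\<forall>r r' x. lm (r * r') x = lm r (lm r' x)) \<and>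
     (\<forall>x. lm 1 x = x) \<and>
     (\<forall>s x y. rm (x + y) s = rm x s + rm y s) \<and>
     (\<forall>s s' x. rm x (s + s') = rm x s + rm x s') \<and>
     (\<forall>s s' x. rm x (s * s') = rm (rm x s) s') \<and>
     (\<forall>x. rm x 1 = x) \<and>
     (\<forall>r x s. rm (lm r x) s = lm r (rm x s))"

definition mc_add ::
  "('r::ring_1 \<times> 'm::ab_group_add \<times> 'n::ab_group_add \<times> 's::ring_1)
   \<Rightarrow> ('r \<times> 'm \<times> 'n \<times> 's) \<Rightarrow> ('r \<times> 'm \<times> 'n \<times> 's)" where
  "mc_add A B = (case A of (r, m, n, s) \<Rightarrow> case B of (r', m', n', s') \<Rightarrow>
      (r + r', m + m', n + n', s + s'))"

text \<open>Product in the Morita context ring with both Morita maps zero.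
  lmM: R acting on M (left), rmM: S acting on M (right),
  lmN: S acting on N (left), rmN: R acting on N (right).\<close>
definition mc_mult ::
  "('r::ring_1 \<Rightarrow> 'm::ab_group_add \<Rightarrow> 'm) \<Rightarrow> ('m \<Rightarrow> 's::ring_1 \<Rightarrow> 'm) \<Rightarrow>
   ('s \<Rightarrow> 'n::ab_group_add \<Rightarrow> 'n) \<Rightarrow> ('n \<Rightarrow> 'r \<Rightarrow> 'n) \<Rightarrow>
   ('r \<times> 'm \<times> 'n \<times> 's) \<Rightarrow> ('r \<times> 'm \<times> 'n \<times> 's) \<Rightarrow> ('r \<times> 'm \<times> 'n \<times> 's)" where
  "mc_mult lmM rmM lmN rmN A B = (case A of (r, m, n, s) \<Rightarrow> case B of (r', m', n', s') \<Rightarrow>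
      (r * r', lmM r m' + rmM m s', rmN n r' + lmN s n', s * s'))"

definition mc_one :: "'r::ring_1 \<times> 'm::ab_group_add \<times> 'n::ab_group_add \<times> 's::ring_1" where
  "mc_one = (1, 0, 0, 1)"

definition mc_ring_iso ::
  "('r::ring_1 \<Rightarrow> 'm::ab_group_add \<Rightarrow> 'm) \<Rightarrow> ('m \<Rightarrow> 's::ring_1 \<Rightarrow> 'm) \<Rightarrow>
   ('s \<Rightarrow> 'n::ab_group_add \<Rightarrow> 'n) \<Rightarrow> ('n \<Rightarrow> 'r \<Rightarrow> 'n) \<Rightarrow>
   ('r2::ring_1 \<Rightarrow> 'm2::ab_group_add \<Rightarrow> 'm2) \<Rightarrow> ('m2 \<Rightarrow> 's2::ring_1 \<Rightarrow> 'm2) \<Rightarrow>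
   ('s2 \<Rightarrow> 'n2::ab_group_add \<Rightarrow> 'n2) \<Rightarrow> ('n2 \<Rightarrow> 'r2 \<Rightarrow> 'n2) \<Rightarrow>
   (('r \<times> 'm \<times> 'n \<times> 's) \<Rightarrow> ('r2 \<times> 'm2 \<times> 'n2 \<times> 's2)) \<Rightarrow> bool" where
  "mc_ring_iso lmM rmM lmN rmN lmM' rmM' lmN' rmN' phi \<longleftrightarrow>
     bij phi \<and>
     (\<forall>A B. phi (mc_add A B) = mc_add (phi A) (phi B)) \<and>
     (\<forall>A B. phi (mc_mult lmM rmM lmN rmN A B) = mc_mult lmM' rmM' lmN' rmN' (phi A) (phi B)) \<and>
     phi mc_one = mc_one"

end

theory Submission
  imports Defs
begin

lemma bim_zero:
  assumes "bimodule lm rm"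
  shows "lm r 0 = 0" "lm 0 x = 0" "rm 0 s = 0" "rm x 0 = 0" "lm 1 x = x" "rm x 1 = x"
proof -
  have "lm r (0+0) = lm r 0 + lm r 0" using assms unfolding bimodule_def by metis
  thus "lm r 0 = 0" by simp
  have "lm (0+0) x = lm 0 x + lm 0 x" using assms unfolding bimodule_def by metis
  thus "lm 0 x = 0" by simp
  have "rm (0+0) s = rm 0 s + rm 0 s" using assms unfolding bimodule_def by metis
  thus "rm 0 s = 0" by simp
  have "rm x (0+0) = rm x 0 + rm x 0" using assms unfolding bimodule_def by metis
  thus "rm x 0 = 0" by simp
  show "lm 1 x = x" "rm x 1 = x" using assms unfolding bimodule_def by blast+
qed

theorem proposition4p4:
  fixes lmM :: "'r::ring_1 \<Rightarrow> 'm::ab_group_add \<Rightarrow> 'm"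
    and rmM :: "'m \<Rightarrow> 's::ring_1 \<Rightarrow> 'm"
    and lmN :: "'s \<Rightarrow> 'n::ab_group_add \<Rightarrow> 'n"
    and rmN :: "'n \<Rightarrow> 'r \<Rightarrow> 'n"
    and lmM' :: "'r2::ring_1 \<Rightarrow> 'm2::ab_group_add \<Rightarrow> 'm2"
    and rmM' :: "'m2 \<Rightarrow> 's2::ring_1 \<Rightarrow> 'm2"
    and lmN' :: "'s2 \<Rightarrow> 'n2::ab_group_add \<Rightarrow> 'n2"
    and rmN' :: "'n2 \<Rightarrow> 'r2 \<Rightarrow> 'n2"
    and phi :: "('r \<times> 'm \<times> 'n \<times> 's) \<Rightarrow> ('r2 \<times> 'm2 \<times> 'n2 \<times> 's2)"
  assumes "only_trivial_idempotents TYPE('r)"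
    and "only_trivial_idempotents TYPE('s)"
    and "only_trivial_idempotents TYPE('r2)"
    and "only_trivial_idempotents TYPE('s2)"
    and "bimodule lmM rmM"
    and "bimodule lmN rmN"
    and "bimodule lmM' rmM'"
    and "bimodule lmN' rmN'"
    and "mc_ring_iso lmM rmM lmN rmN lmM' rmM' lmN' rmN' phi"
  shows "(\<exists>a1 :: 'm2. \<exists>v1 :: 'n \<Rightarrow> 'n2. \<forall>n. phi (1, 0, n, 0) = (1, a1, v1 n, 0))
       \<or> (\<exists>b2 :: 'n2. \<exists>u2 :: 'n \<Rightarrow> 'm2. \<forall>n. phi (1, 0, n, 0) = (0, u2 n, b2, 1))"
proof -
  note z1 = bim_zero[OF assms(5)] and z2 = bim_zero[OF assms(6)]
    and z3 = bim_zero[OF assms(7)] and z4 = bim_zero[OF assms(8)]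
  have inj: "inj phi" and hadd: "\<And>A B. phi (mc_add A B) = mc_add (phi A) (phi B)"
    and hmul: "\<And>A B. phi (mc_mult lmM rmM lmN rmN A B) = mc_mult lmM' rmM' lmN' rmN' (phi A) (phi B)"
    and hone: "phi mc_one = mc_one"
    using assms(9) unfolding mc_ring_iso_def bij_def by auto
  have p0: "phi (0,0,0,0) = (0,0,0,0)"
  proof -
    obtain a b c d where e: "phi (0,0,0,0) = (a,b,c,d)" by (cases "phi (0,0,0,0)") auto
    have "phi (mc_add (0,0,0,0) (0,0,0,0)) = mc_add (phi (0,0,0,0)) (phi (0,0,0,0))" by (rule hadd)
    hence "(a,b,c,d) = (a+a,b+b,c+c,d+d)" using e by (simp add: mc_add_def)
    thus ?thesis using e by simp
  qed
  define E0 :: "'r \<times> 'm \<times> 'n \<times> 's" where "E0 = (1,0,0,0)"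
  obtain r m k s where e0: "phi E0 = (r,m,k,s)" by (cases "phi E0") auto
  have "phi (mc_mult lmM rmM lmN rmN E0 E0) = phi E0"
    by (simp add: E0_def mc_mult_def z1 z2)
  hence idem: "(r*r, lmM' r m + rmM' m s, rmN' k r + lmN' s k, s*s) = (r,m,k,s)"
    using hmul[of E0 E0] e0 by (simp add: mc_mult_def)
  have r01: "r = 0 \<or> r = 1" using assms(3) idem unfolding only_trivial_idempotents_def by auto
  have s01: "s = 0 \<or> s = 1" using assms(4) idem unfolding only_trivial_idempotents_def by auto
  have XE: "\<And>n. mc_mult lmM rmM lmN rmN (0,0,n,0) E0 = (0,0,n,0)"
    by (simp add: E0_def mc_mult_def z1 z2)
  have EX: "\<And>n. mc_mult lmM rmM lmN rmN E0 (0,0,n,0) = (0,0,0,0)"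
    by (simp add: E0_def mc_mult_def z1 z2)
  have EN: "\<And>n. (1,0,n,0) = mc_add E0 (0,0,n,0)"
    by (simp add: E0_def mc_add_def)
  show ?thesis
  proof (cases "r = 1")
    case True
    show ?thesis
    proof (cases "s = 0")
      case s0: True
      have "\<forall>n. phi (1, 0, n, 0) = (1, m, k + fst (snd (snd (phi (0,0,n,0)))), 0)"
      proof
        fix n
        obtain p q kk t where x: "phi (0,0,n,0) = (p,q,kk,t)" by (cases "phi (0,0,n,0)") auto
        have a: "mc_mult lmM' rmM' lmN' rmN' (phi E0) (phi (0,0,n,0)) = (0,0,0,0)"
          using hmul[of E0 "(0,0,n,0)"] EX p0 by simp
        have b: "mc_mult lmM' rmM' lmN' rmN' (phi (0,0,n,0)) (phi E0) = phi (0,0,n,0)"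
          using hmul[of "(0,0,n,0)" E0] XE by simp
        from a have a': "p = 0" "q + rmM' m t = 0"
          using True s0 by (simp_all add: e0 x mc_mult_def z3 z4)
        from b have "t = 0" using True s0 by (simp add: e0 x mc_mult_def z3 z4)
        with a' have "q = 0" by (simp add: z3)
        thus "phi (1, 0, n, 0) = (1, m, k + fst (snd (snd (phi (0,0,n,0)))), 0)"
          using EN[of n] hadd[of E0 "(0,0,n,0)"] True s0 a' \<open>t = 0\<close>
          by (simp add: e0 x mc_add_def)
      qed
      thus ?thesis by (intro disjI1 exI[of _ m] exI[of _ "\<lambda>n. k + fst (snd (snd (phi (0,0,n,0))))"]) simp
    next
      case False
      with s01 have s1: "s = 1" by simp
      have "m = 0" "k = 0" using idem True s1 by (simp_all add: z3 z4)
      hence "phi E0 = phi mc_one" using e0 True s1 hone by (simp add: mc_one_def)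
      hence "E0 = mc_one" using inj by (simp add: inj_eq)
      thus ?thesis by (simp add: E0_def mc_one_def)
    qed
  next
    case False
    with r01 have r0: "r = 0" by simp
    show ?thesis
    proof (cases "s = 1")
      case s1: True
      have "\<forall>n. phi (1, 0, n, 0) = (0, m + fst (snd (phi (0,0,n,0))), k, 1)"
      proof
        fix n
        obtain p q kk t where x: "phi (0,0,n,0) = (p,q,kk,t)" by (cases "phi (0,0,n,0)") auto
        have a: "mc_mult lmM' rmM' lmN' rmN' (phi E0) (phi (0,0,n,0)) = (0,0,0,0)"
          using hmul[of E0 "(0,0,n,0)"] EX p0 by simp
        have b: "mc_mult lmM' rmM' lmN' rmN' (phi (0,0,n,0)) (phi E0) = phi (0,0,n,0)"
          using hmul[of "(0,0,n,0)" E0] XE by simp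
        from a have a': "t = 0" "rmN' k p + kk = 0"
          using r0 s1 by (simp_all add: e0 x mc_mult_def z3 z4)
        from b have "p = 0" using r0 s1 by (simp add: e0 x mc_mult_def z3 z4)
        with a' have "kk = 0" by (simp add: z4)
        thus "phi (1, 0, n, 0) = (0, m + fst (snd (phi (0,0,n,0))), k, 1)"
          using EN[of n] hadd[of E0 "(0,0,n,0)"] r0 s1 a' \<open>p = 0\<close>
          by (simp add: e0 x mc_add_def)
      qed
      thus ?thesis apply - apply (rule disjI2) apply (rule exI[of _ k]) apply (rule exI[of _ "\<lambda>n. m + fst (snd (phi (0,0,n,0)))"]) by simp
    next
      case False
      with s01 have s0: "s = 0" by simp
      have "m = 0" "k = 0" using idem r0 s0 by (simp_all add: z3 z4)
      hence "phi E0 = phi (0,0,0,0)" using e0 r0 s0 p0 by simp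
      hence "E0 = (0,0,0,0)" using inj by (simp add: inj_eq)
      thus ?thesis by (simp add: E0_def)
    qed
  qed
qed

end
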